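(* Let $S>0$, $\zeta\in\{0,1\}$, $\phi\in\mathbb{R}$ and let $(u_n)_{n\in\mathbb{N}}$ be the $\phi$-market impact scenario defined below. Assume that for every $x\in\mathbb{R}$ the sequence $(s_n(x))_{n\in\mathbb{N}}$ is bounded. Then the following are equivalent: (i) $(u_n)$ is admissible from a trading perspective; (ii) $\phi\in(-\infty,1)$; (iii) there exists $R>0$ such that for every $x\in(-R,R)$, $\sum_{n\ge0}u_n(x)$ converges; (iv) there exists $R>0$ such that for every $x\in(-R,R)$, $\sum_{n\ge0}u_n(x)$ converges absolutely.
   Context: Fix $S>0$, $\zeta\in\{0,1\}$ and $\phi\in\mathbb{R}$. For $a,b\in\mathbb{R}$ write $a\vee b=\max(a,b)$. The $\phi$-market impact scenario starting from $x\in\mathbb{R}$ is the sequence of real-valued functions $(u_n)_{n\in\mathbb{N}}$ defined by $u_0(x)=x\vee(-S)$ and, for all $n\in\mathbb{N}$, $u_{n+1}(x)=\Big(\phi\big(1+\tfrac{s_n(x)}{S}\big)^{1+\zeta}u_n(x)\Big)\vee\big(-s_n(x)-S\big)$, where $s_n(x)=\sum_{k=0}^n u_k(x)$. The scenario is called admissible from a trading perspective if there exists $R>0$ such that for every $x\in(-R,R)$ the series $\sum_{n\ge0}u_n(x)$ converges. *)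

theory Defs
  imports "HOL-Analysis.Analysis"
begin

fun mi_pair :: "real \<Rightarrow> nat \<Rightarrow> real \<Rightarrow> real \<Rightarrow> nat \<Rightarrow> real \<times> real" where
  "mi_pair S \<zeta> \<phi> x 0 = (max x (-S), max x (-S))"
| "mi_pair S \<zeta> \<phi> x (Suc n) =
     (let (u, s) = mi_pair S \<zeta> \<phi> x n;
          u' = max (\<phi> * (1 + s / S) ^ (1 + \<zeta>) * u) (- s - S)
      in (u', s + u'))"

definition mi_u :: "real \<Rightarrow> nat \<Rightarrow> real \<Rightarrow> nat \<Rightarrow> real \<Rightarrow> real" where
  "mi_u S \<zeta> \<phi> n x = fst (mi_pair S \<zeta> \<phi> x n)"

definition mi_s :: "real \<Rightarrow> nat \<Rightarrow> real \<Rightarrow> nat \<Rightarrow> real \<Rightarrow> real" where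
  "mi_s S \<zeta> \<phi> n x = (\<Sum>k\<le>n. mi_u S \<zeta> \<phi> k x)"

definition admissible_trading :: "(nat \<Rightarrow> real \<Rightarrow> real) \<Rightarrow> bool" where
  "admissible_trading u \<longleftrightarrow> (\<exists>R>0. \<forall>x\<in>{-R<..<R}. summable (\<lambda>n. u n x))"

end

theory Submission
  imports Defs
begin


lemma LIMSEQ_even_odd':
  fixes f :: "nat \<Rightarrow> real"
  assumes e: "(\<lambda>i. f (2*i)) \<longlonglongrightarrow> a" and o: "(\<lambda>i. f (2*i+1)) \<longlonglongrightarrow> a"
  shows "f \<longlonglongrightarrow> a"
proof (rule LIMSEQ_I)
  fix r :: real assume r: "0 < r"
  obtain N1 where N1: "\<And>i. i \<ge> N1 \<Longrightarrow> norm (f (2*i) - a) < r" using LIMSEQ_D[OF e r] by blast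
  obtain N2 where N2: "\<And>i. i \<ge> N2 \<Longrightarrow> norm (f (2*i+1) - a) < r" using LIMSEQ_D[OF o r] by blast
  show "\<exists>N. \<forall>n\<ge>N. norm (f n - a) < r"
  proof (intro exI allI impI)
    fix n assume n: "2*(N1+N2) \<le> n"
    show "norm (f n - a) < r"
    proof (cases "even n")
      case True then obtain i where "n = 2*i" by blast
      with n N1[of i] show ?thesis by auto
    next
      case False then obtain i where "n = 2*i+1" using oddE by blast
      with n N2[of i] show ?thesis by auto
    qed
  qed
qed

lemma two_step_summable:
  fixes a :: "nat \<Rightarrow> real"
  assumes "0 < \<rho>" "\<rho> < 1" and h: "\<And>n. n \<ge> N \<Longrightarrow> \<bar>a (n+2)\<bar> \<le> \<rho> * \<bar>a n\<bar>"
  shows "summable (\<lambda>n. \<bar>a n\<bar>)"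
proof -
  define r where "r = sqrt \<rho>"
  have r: "0 < r" "r < 1" "r*r = \<rho>" using assms by (auto simp: r_def real_sqrt_lt_1_iff)
  define v where "v n = \<bar>a n\<bar> + \<bar>a (Suc n)\<bar> / r" for n
  have "summable v"
  proof (rule summable_ratio_test[of r N])
    show "r < 1" by fact
    fix n assume "N \<le> n"
    have "\<bar>a (Suc (Suc n))\<bar> \<le> r*r * \<bar>a n\<bar>" using h[OF \<open>N \<le> n\<close>] r(3) by (simp add: numeral_2_eq_2)
    hence "\<bar>a (Suc (Suc n))\<bar> / r \<le> r * \<bar>a n\<bar>" using r(1) by (simp add: pos_divide_le_eq mult_ac)
    moreover have "v n \<ge> 0" "v (Suc n) \<ge> 0" using r by (auto simp: v_def)
    ultimately show "norm (v (Suc n)) \<le> r * norm (v n)"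
      using r by (simp add: v_def distrib_left)
  qed
  moreover have "\<bar>a n\<bar> \<le> v n" for n using r by (simp add: v_def)
  ultimately show ?thesis using summable_comparison_test[of "\<lambda>n. \<bar>a n\<bar>" v] by fastforce
qed


lemma pow_diff_ge:
  fixes A B c :: real
  assumes "z \<le> (1::nat)" "0 \<le> A" "B = A + c" "0 \<le> c"
  shows "B ^ Suc z - A ^ Suc z \<ge> c * B ^ z"
proof (cases z)
  case 0 then show ?thesis using assms by simp
next
  case (Suc z') then have "z = 1" using assms by simp
  then show ?thesis using assms by (simp add: power2_eq_square algebra_simps)
qed

lemma core:
  fixes t w :: "nat \<Rightarrow> real" and q T :: real and z :: nat
  assumes q: "q > 0" and z: "z \<le> 1" and tpos: "\<And>n. t n > 0" and tT: "\<And>n. t n \<le> T"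
   and rw: "\<And>n. w (Suc n) = - q * t n ^ Suc z * w n"
   and rt: "\<And>n. t (Suc n) = t n + w (Suc n)"
   and w0: "w 0 > 0"
  shows "summable (\<lambda>n. \<bar>w n\<bar>)"
proof -
  define k where "k = Suc z"
  have tk: "t n ^ k > 0" for n using tpos[of n] by simp
  have sgn: "w (2*i) > 0 \<and> w (Suc (2*i)) < 0" for i
  proof (induction i)
    case 0 then show ?case using w0 rw[of 0] q tk[of 0] by (simp add: k_def mult_pos_pos)
  next
    case (Suc i)
    have e: "2 * Suc i = Suc (Suc (2*i))" by simp
    have 1: "w (2 * Suc i) > 0" unfolding e rw[of "Suc (2*i)"] using Suc q tk[of "Suc (2*i)"]
      by (simp add: k_def mult_pos_neg mult_neg_neg)
    have 2: "w (Suc (2 * Suc i)) < 0" unfolding rw[of "2 * Suc i"] using 1 q tk[of "2 * Suc i"]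
      by (simp add: k_def mult_pos_pos)
    show ?case using 1 2 by simp
  qed
  define b where "b i = - w (Suc (2*i))" for i
  define c where "c i = w (Suc (Suc (2*i)))" for i
  define m where "m i = (t (2*i) + t (Suc (2*i))) / 2" for i
  have e2: "2 * Suc i = Suc (Suc (2*i))" for i by simp
  have bpos: "b i > 0" for i using sgn[of i] by (simp add: b_def)
  have cpos: "c i > 0" for i using sgn[of "Suc i"] by (simp add: c_def e2)
  have t1: "t (Suc (2*i)) = t (2*i) - b i" for i using rt[of "2*i"] by (simp add: b_def)
  have t2: "t (Suc (Suc (2*i))) = t (Suc (2*i)) + c i" for i using rt[of "Suc (2*i)"] by (simp add: c_def)
  have t3: "t (Suc (Suc (Suc (2*i)))) = t (Suc (Suc (2*i))) - b (Suc i)" for i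
    using rt[of "Suc (Suc (2*i))"] by (simp add: b_def e2)
  have cb: "c i = q * t (Suc (2*i)) ^ k * b i" for i
    using rw[of "Suc (2*i)"] by (simp add: b_def c_def k_def)
  have bc: "b (Suc i) = q * t (Suc (Suc (2*i))) ^ k * c i" for i
    using rw[of "Suc (Suc (2*i))"] by (simp add: b_def c_def k_def e2)
  have te: "t (2*i) = m i + b i / 2" for i using t1[of i] by (simp add: m_def field_simps)
  have to: "t (Suc (2*i)) = m i - b i / 2" for i using t1[of i] by (simp add: m_def field_simps)
  have msuc: "m (Suc i) = (t (Suc (Suc (2*i))) + t (Suc (Suc (Suc (2*i))))) / 2" for i
    by (simp add: m_def e2)
  have dec: "m i - m (Suc i) \<ge> q/2 * c i ^ 2 * t (Suc (Suc (2*i))) ^ z" for i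
  proof -
    define A where "A = t (Suc (2*i))"
    define B where "B = t (Suc (Suc (2*i)))"
    define y where "y = q * A ^ k"
    have A0: "A > 0" using tpos by (simp add: A_def)
    have y0: "y > 0" using q A0 by (simp add: y_def)
    have BA: "B = A + c i" using t2 by (simp add: A_def B_def)
    have eq: "m i - m (Suc i) = (b i + b (Suc i) - 2 * c i) / 2"
      using msuc[of i] t1[of i] t2[of i] t3[of i] by (simp add: m_def field_simps)
    have cy: "c i = y * b i" using cb[of i] by (simp add: y_def A_def)
    have bi: "b i = c i / y" using y0 unfolding cy by simp
    have bs: "b (Suc i) = q * B ^ k * c i" using bc[of i] by (simp add: B_def)
    have pd: "B ^ k - A ^ k \<ge> c i * B ^ z" unfolding k_def
      using pow_diff_ge[OF z _ BA] A0 cpos[of i] by simp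
    have "c i / y + y * c i - 2 * c i = c i * (y - 1)^2 / y" using y0
      by (simp add: field_simps power2_eq_square)
    also have "\<dots> \<ge> 0" using y0 cpos[of i] by simp
    finally have h1: "c i / y + y * c i - 2 * c i \<ge> 0" .
    have "q * B ^ k * c i - y * c i = q * c i * (B ^ k - A ^ k)" by (simp add: y_def algebra_simps)
    also have "\<dots> \<ge> q * c i * (c i * B ^ z)" using pd q cpos[of i]
      by (intro mult_left_mono) auto
    finally have h2: "q * B ^ k * c i - y * c i \<ge> q * c i ^ 2 * B ^ z" by (simp add: power2_eq_square mult_ac)
    have "b i + b (Suc i) - 2 * c i \<ge> q * c i ^ 2 * B ^ z" using h1 h2 bi bs by linarith
    then show ?thesis using eq by (simp add: B_def)
  qed
  have Bge: "t (Suc (Suc (2*i))) \<ge> c i" for i using t2[of i] tpos[of "Suc (2*i)"] by simp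
  have decnn: "m i - m (Suc i) \<ge> 0" for i
    proof -
    have "0 \<le> q/2 * c i ^ 2 * t (Suc (Suc (2*i))) ^ z" using q tpos[of "Suc (Suc (2*i))"] by simp
    thus ?thesis using dec[of i] by linarith
  qed
  have mpos: "m i > 0" for i using tpos[of "2*i"] tpos[of "Suc (2*i)"] by (simp add: m_def)
  obtain M where mM: "m \<longlonglongrightarrow> M" and Mle: "\<forall>i. M \<le> m i"
  proof -
    have "antimono_on UNIV m" by (rule decseq_SucI) (use decnn in simp)
    moreover have "\<forall>i. 0 \<le> m i" using mpos less_imp_le by blast
    ultimately show ?thesis using decseq_convergent[of m 0] that by blast
  qed
  have M0: "M \<ge> 0" using LIMSEQ_le_const[OF mM, of 0] mpos by (meson less_eq_real_def)
  have dlim: "(\<lambda>i. m i - m (Suc i)) \<longlonglongrightarrow> 0"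
    using tendsto_diff[OF mM LIMSEQ_Suc[OF mM]] by simp
  have cpow: "c i ^ (2 + z) \<le> (2/q) * (m i - m (Suc i))" for i
  proof -
    have "c i ^ z \<le> t (Suc (Suc (2*i))) ^ z" using Bge[of i] cpos[of i] by (intro power_mono) auto
    hence "q/2 * c i ^ 2 * c i ^ z \<le> q/2 * c i ^ 2 * t (Suc (Suc (2*i))) ^ z" using q by (intro mult_left_mono) auto
    moreover have "q/2 * c i ^ (2 + z) = q/2 * c i ^ 2 * c i ^ z" by (simp add: power_add power2_eq_square)
    ultimately have "q/2 * c i ^ (2 + z) \<le> m i - m (Suc i)" using dec[of i] by linarith
    thus ?thesis using q by (simp add: field_simps)
  qed
  have cpl: "(\<lambda>i. c i ^ (2+z)) \<longlonglongrightarrow> 0"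
  proof (rule tendsto_sandwich[of "\<lambda>_. 0" _ _ "\<lambda>i. (2/q) * (m i - m (Suc i))"])
    show "\<forall>\<^sub>F n in sequentially. 0 \<le> c n ^ (2 + z)" using cpos by (simp add: less_imp_le)
    show "\<forall>\<^sub>F n in sequentially. c n ^ (2 + z) \<le> 2 / q * (m n - m (Suc n))" using cpow by simp
    show "(\<lambda>n. 0) \<longlonglongrightarrow> (0::real)" by simp
    show "(\<lambda>i. 2 / q * (m i - m (Suc i))) \<longlonglongrightarrow> 0" by (rule tendsto_mult_right_zero[OF dlim])
  qed
  have cl: "c \<longlonglongrightarrow> 0"
  proof -
    have "(\<lambda>i. root (2+z) (c i ^ (2+z))) \<longlonglongrightarrow> root (2+z) 0" by (rule tendsto_real_root[OF cpl])
    moreover have "root (2+z) (c i ^ (2+z)) = c i" for i using cpos[of i] real_root_pos2[of "2+z" "c i"] by (simp del: power_Suc)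
    ultimately show ?thesis by simp
  qed
  have bsuc_le: "b (Suc i) \<le> q * T ^ k * c i" for i
  proof -
    have "t (Suc (Suc (2*i))) ^ k \<le> T ^ k" using tT tpos less_imp_le by (intro power_mono) auto
    thus ?thesis using bc[of i] q cpos[of i] by (simp add: mult_right_mono)
  qed
  have bl: "b \<longlonglongrightarrow> 0"
  proof -
    have "(\<lambda>i. b (Suc i)) \<longlonglongrightarrow> 0"
    proof (rule tendsto_sandwich[of "\<lambda>_. 0" _ _ "\<lambda>i. q * T ^ k * c i"])
      show "\<forall>\<^sub>F n in sequentially. 0 \<le> b (Suc n)" using bpos by (simp add: less_imp_le)
      show "\<forall>\<^sub>F n in sequentially. b (Suc n) \<le> q * T ^ k * c n" using bsuc_le by simp
      show "(\<lambda>n. 0) \<longlonglongrightarrow> (0::real)" by simp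
      show "(\<lambda>i. q * T ^ k * c i) \<longlonglongrightarrow> 0" by (rule tendsto_mult_right_zero[OF cl])
    qed
    thus ?thesis by (rule LIMSEQ_imp_Suc)
  qed
  have tM: "t \<longlonglongrightarrow> M"
  proof (rule LIMSEQ_even_odd')
    show "(\<lambda>i. t (2*i)) \<longlonglongrightarrow> M" unfolding te using tendsto_add[OF mM tendsto_divide[OF bl, of "\<lambda>_. 2" 2]] by simp
    show "(\<lambda>i. t (2*i+1)) \<longlonglongrightarrow> M" using to tendsto_diff[OF mM tendsto_divide[OF bl, of "\<lambda>_. 2" 2]] by simp
  qed
  have kpos: "k > 0" "k \<le> 2" using z by (auto simp: k_def)
  show ?thesis
  proof (cases "q * M ^ k < 1")
    case True
    define P where "P = q * M ^ k"
    have P0: "P \<ge> 0" "P < 1" using q M0 True by (auto simp: P_def)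
    define \<rho> where "\<rho> = (1 + P)/2"
    have "P*P \<le> 1*P" using P0 by (intro mult_right_mono) auto
    hence PP: "P*P \<le> P" using P0 by simp
    have \<rho>: "0 < \<rho>" "\<rho> < 1" "P*P < \<rho>" unfolding \<rho>_def using PP P0 by auto
    have gl: "(\<lambda>n. (q * t n ^ k) * (q * t (Suc n) ^ k)) \<longlonglongrightarrow> P * P"
      unfolding P_def by (intro tendsto_intros tM LIMSEQ_Suc[OF tM])
    have "eventually (\<lambda>n. (q * t n ^ k) * (q * t (Suc n) ^ k) < \<rho>) sequentially"
      using order_tendstoD(2)[OF gl \<rho>(3)] .
    then obtain N where N: "\<And>n. n \<ge> N \<Longrightarrow> (q * t n ^ k) * (q * t (Suc n) ^ k) < \<rho>"
      by (auto simp: eventually_sequentially)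
    show ?thesis
    proof (rule two_step_summable[OF \<rho>(1) \<rho>(2)])
      fix n assume n: "N \<le> n"
      have "w (n+2) = (q * t n ^ k) * (q * t (Suc n) ^ k) * w n"
        using rw[of "Suc n"] rw[of n] by (simp add: k_def numeral_2_eq_2 del: power_Suc)
      hence "\<bar>w (n+2)\<bar> = (q * t n ^ k) * (q * t (Suc n) ^ k) * \<bar>w n\<bar>"
        using q tk[of n] tk[of "Suc n"] by (simp add: abs_mult)
      also have "\<dots> \<le> \<rho> * \<bar>w n\<bar>" using N[OF n] by (intro mult_right_mono) auto
      finally show "\<bar>w (n+2)\<bar> \<le> \<rho> * \<bar>w n\<bar>" .
    qed
  next
    case False
    then have PM: "q * M ^ k \<ge> 1" by simp
    have Mpos: "M > 0"
    proof (rule ccontr)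
      assume "\<not> M > 0" then have "M = 0" using M0 by simp
      then show False using PM by (simp add: k_def)
    qed
    have PP1: "(q * M ^ k) * (q * M ^ k) \<ge> 1" using mult_mono[OF PM PM] PM by simp
    have tB: "t (Suc (Suc (2*i))) \<ge> M + b (Suc i) / 2" for i
      using te[of "Suc i"] Mle by (simp add: e2)
    have tA: "t (Suc (2*i)) \<ge> M - b i / 2" for i using to[of i] Mle by simp
    have c2: "c i ^ 2 \<le> (2 / (q * M ^ z)) * (m i - m (Suc i))" for i
    proof -
      have "M ^ z \<le> t (Suc (Suc (2*i))) ^ z" using tB[of i] bpos[of "Suc i"] Mpos
        by (intro power_mono) auto
      hence "q/2 * c i ^ 2 * M ^ z \<le> q/2 * c i ^ 2 * t (Suc (Suc (2*i))) ^ z"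
        using q by (intro mult_left_mono) auto
      hence "q/2 * c i ^ 2 * M ^ z \<le> m i - m (Suc i)" using dec[of i] by linarith
      moreover have "q * M ^ z > 0" using q Mpos by simp
      ultimately show ?thesis by (simp add: field_simps)
    qed
    have sm: "summable (\<lambda>i. m i - m (Suc i))" by (rule telescope_summable'[OF mM])
    have sc: "summable (\<lambda>i. c i ^ 2)"
      by (rule summable_comparison_test[OF _ summable_mult[OF sm, of "2 / (q * M ^ z)"]]) (use c2 in \<open>auto simp del: power_Suc\<close>)
    have sb1: "summable (\<lambda>i. b (Suc i) ^ 2)"
    proof (rule summable_comparison_test[OF _ summable_mult[OF sc, of "(q * T ^ k)^2"]])
      show "\<exists>N. \<forall>n\<ge>N. norm (b (Suc n) ^ 2) \<le> (q * T ^ k)\<^sup>2 * c n ^ 2"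
      proof (intro exI allI impI)
        fix n
        have "b (Suc n) ^ 2 \<le> (q * T ^ k * c n) ^ 2"
          using bsuc_le[of n] bpos[of "Suc n"] by (intro power_mono) auto
        thus "norm (b (Suc n) ^ 2) \<le> (q * T ^ k)\<^sup>2 * c n ^ 2" by (simp add: power_mult_distrib)
      qed
    qed
    have sb: "summable (\<lambda>i. b i ^ 2)" using sb1 summable_Suc_iff by blast
    define \<beta> where "\<beta> i = b i / (2 * M)" for i
    define y where "y i = real k * \<beta> i ^ 2" for i
    have y_eq: "y i = (real k / (4 * M^2)) * b i ^ 2" for i
      by (simp add: y_def \<beta>_def power_divide power_mult_distrib)
    have sy: "summable y" unfolding y_eq[abs_def] by (rule summable_mult[OF sb])
    have "eventually (\<lambda>i. b i < M) sequentially" using order_tendstoD(2)[OF bl Mpos] .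
    then obtain N where N: "\<And>i. i \<ge> N \<Longrightarrow> b i < M" by (auto simp: eventually_sequentially)
    have \<beta>0: "\<beta> i > 0" for i using bpos Mpos by (simp add: \<beta>_def)
    have \<beta>h: "\<beta> i \<le> 1/2" if "i \<ge> N" for i using N[OF that] Mpos by (simp add: \<beta>_def field_simps)
    have yh: "y i \<le> 1/2" "y i \<ge> 0" if "i \<ge> N" for i
    proof -
      have "\<beta> i ^ 2 \<le> (1/2)^2" using \<beta>h[OF that] \<beta>0[of i] by (intro power_mono) auto
      moreover have "real k \<le> 2" using kpos by simp
      ultimately have "real k * \<beta> i ^ 2 \<le> 2 * (1/2)^2" by (intro mult_mono) auto
      also have "(2::real) * (1/2)^2 = 1/2" by (simp add: power2_eq_square)
      finally have "real k * \<beta> i ^ 2 \<le> 1/2" .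
      then show "y i \<le> 1/2" by (simp add: y_def)
      show "y i \<ge> 0" by (simp add: y_def)
    qed
    define G where "G i = b i / (1 + \<beta> i) ^ k" for i
    have Gpos: "G i > 0" for i using bpos[of i] \<beta>0[of i] by (simp add: G_def)
    have step: "G (Suc i) \<ge> G i * exp (- 2 * y i)" if i: "i \<ge> N" for i
    proof -
      define A where "A = t (Suc (2*i))"
      define B where "B = t (Suc (Suc (2*i)))"
      have bM: "b i / 2 = M * \<beta> i" "b (Suc i) / 2 = M * \<beta> (Suc i)" using Mpos by (auto simp: \<beta>_def)
      have A1: "A \<ge> M * (1 - \<beta> i)" using tA[of i] bM by (simp add: A_def algebra_simps)
      have B1: "B \<ge> M * (1 + \<beta> (Suc i))" using tB[of i] bM by (simp add: B_def algebra_simps)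
      have h1: "1 - \<beta> i \<ge> 0" using \<beta>h[OF i] by simp
      have bs: "b (Suc i) = (q * B ^ k) * (q * A ^ k) * b i" using bc[of i] cb[of i] by (simp add: A_def B_def)
      have AB: "(q * B ^ k) * (q * A ^ k) \<ge> (1 + \<beta> (Suc i)) ^ k * (1 - \<beta> i) ^ k"
      proof -
        have "B ^ k \<ge> (M * (1 + \<beta> (Suc i))) ^ k" using B1 Mpos \<beta>0[of "Suc i"] by (intro power_mono) auto
        moreover have "A ^ k \<ge> (M * (1 - \<beta> i)) ^ k" using A1 Mpos h1 by (intro power_mono) auto
        ultimately have "(q * B ^ k) * (q * A ^ k) \<ge> (q * (M * (1 + \<beta> (Suc i))) ^ k) * (q * (M * (1 - \<beta> i)) ^ k)"
          using q Mpos h1 \<beta>0[of "Suc i"] tpos[of "Suc (Suc (2*i))"] by (intro mult_mono mult_left_mono) (auto simp: B_def)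
        also have "(q * (M * (1 + \<beta> (Suc i))) ^ k) * (q * (M * (1 - \<beta> i)) ^ k)
            = ((q * M ^ k) * (q * M ^ k)) * ((1 + \<beta> (Suc i)) ^ k * (1 - \<beta> i) ^ k)"
          by (simp add: power_mult_distrib mult_ac)
        also have "\<dots> \<ge> 1 * ((1 + \<beta> (Suc i)) ^ k * (1 - \<beta> i) ^ k)"
          using PP1 h1 \<beta>0[of "Suc i"] by (intro mult_right_mono) (auto simp del: power_Suc)
        finally show ?thesis by simp
      qed
      have "b (Suc i) \<ge> (1 + \<beta> (Suc i)) ^ k * (1 - \<beta> i) ^ k * b i"
        using bs AB bpos[of i] by (simp add: mult_right_mono)
      hence G1: "G (Suc i) \<ge> (1 - \<beta> i) ^ k * b i"
        using \<beta>0[of "Suc i"] by (simp add: G_def field_simps)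
      have "(1 - \<beta> i) ^ k * b i = ((1 - \<beta> i) * (1 + \<beta> i)) ^ k * G i"
        using \<beta>0[of i] by (simp add: G_def power_mult_distrib)
      also have "((1 - \<beta> i) * (1 + \<beta> i)) = 1 + (- (\<beta> i ^ 2))" by (simp add: algebra_simps power2_eq_square)
      finally have G2: "G (Suc i) \<ge> (1 + (- (\<beta> i ^ 2))) ^ k * G i" using G1 by simp
      have "\<beta> i ^ 2 \<le> 1" using \<beta>h[OF i] \<beta>0[of i] by (intro power_le_one) auto
      then have "(1 + (- (\<beta> i ^ 2))) ^ k \<ge> 1 + real k * (- (\<beta> i ^ 2))" by (intro Bernoulli_inequality) simp
      hence bern: "(1 + (- (\<beta> i ^ 2))) ^ k \<ge> 1 - y i" by (simp add: y_def)
      have "ln (1 - y i) \<ge> - y i - 2 * (y i)^2" using yh[OF i] by (intro ln_one_minus_pos_lower_bound) auto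
      moreover have "- y i - 2 * (y i)^2 \<ge> - 2 * y i"
      proof -
        have "(2 * y i) * y i \<le> 1 * y i" using yh[OF i] by (intro mult_right_mono) auto
        thus ?thesis by (simp add: power2_eq_square)
      qed
      ultimately have "exp (- 2 * y i) \<le> exp (ln (1 - y i))" by simp
      also have "\<dots> = 1 - y i" using yh[OF i] by simp
      finally have "exp (- 2 * y i) \<le> (1 + (- (\<beta> i ^ 2))) ^ k" using bern by simp
      hence "G i * exp (- 2 * y i) \<le> G i * (1 + (- (\<beta> i ^ 2))) ^ k" using Gpos[of i] by (intro mult_left_mono) auto
      thus ?thesis using G2 by (simp add: mult.commute)
    qed
    have ind: "G (N + n) \<ge> G N * exp (- 2 * (\<Sum>j<n. y (N + j)))" for n
    proof (induction n)
      case 0 then show ?case by simp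
    next
      case (Suc n)
      have a: "G (Suc (N + n)) \<ge> G (N + n) * exp (- 2 * y (N + n))" using step[of "N + n"] by simp
      have b: "G (N + n) * exp (- 2 * y (N + n)) \<ge> G N * exp (- 2 * (\<Sum>j<n. y (N + j))) * exp (- 2 * y (N + n))"
        using Suc by (intro mult_right_mono) auto
      have e: "G N * exp (- 2 * (\<Sum>j<Suc n. y (N + j))) = G N * exp (- 2 * (\<Sum>j<n. y (N + j))) * exp (- 2 * y (N + n))"
        by (simp add: mult.assoc mult_exp_exp algebra_simps)
      have ns: "N + Suc n = Suc (N + n)" by simp
      have "G N * exp (- 2 * (\<Sum>j<n. y (N + j))) * exp (- 2 * y (N + n)) \<le> G (Suc (N + n))"
        by (rule order_trans[OF b a])
      then show ?case by (simp only: e ns)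
    qed
    define Y where "Y = suminf (\<lambda>j. y (N + j))"
    have syN: "summable (\<lambda>j. y (N + j))" using sy summable_iff_shift[of y N] by (simp add: add.commute)
    have sumle: "(\<Sum>j<n. y (N + j)) \<le> Y" for n
      unfolding Y_def by (rule sum_le_suminf[OF syN]) (auto intro: yh)
    define \<epsilon> where "\<epsilon> = G N * exp (- 2 * Y)"
    have \<epsilon>: "\<epsilon> > 0" using Gpos[of N] by (simp add: \<epsilon>_def)
    have blow: "b (N + n) \<ge> \<epsilon>" for n
    proof -
      have "exp (- 2 * Y) \<le> exp (- 2 * (\<Sum>j<n. y (N + j)))" using sumle[of n] by simp
      hence "\<epsilon> \<le> G (N + n)" using ind[of n] Gpos[of N] unfolding \<epsilon>_def
        by (meson mult_left_mono less_imp_le order_trans)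
      moreover have "G (N + n) \<le> b (N + n)"
      proof -
        have "(1 + \<beta> (N + n)) ^ k \<ge> 1" using \<beta>0[of "N+n"] by (intro one_le_power) auto
        then show ?thesis using bpos[of "N+n"] by (simp add: G_def divide_le_eq_1 field_simps)
      qed
      ultimately show ?thesis by simp
    qed
    have "eventually (\<lambda>i. b i < \<epsilon>) sequentially" using order_tendstoD(2)[OF bl \<epsilon>] .
    then obtain N2 where "\<And>i. i \<ge> N2 \<Longrightarrow> b i < \<epsilon>" by (auto simp: eventually_sequentially)
    then have "b (N + N2) < \<epsilon>" by simp
    with blow[of N2] show ?thesis by simp
  qed
qed


lemma mi_pair_eq: "mi_pair S z p x n = (mi_u S z p n x, mi_s S z p n x)"
proof (induction n)
  case 0 then show ?case by (simp add: mi_u_def mi_s_def)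
next
  case (Suc n)
  have "mi_s S z p (Suc n) x = mi_s S z p n x + mi_u S z p (Suc n) x"
    by (simp add: mi_s_def)
  moreover have "mi_u S z p (Suc n) x = fst (mi_pair S z p x (Suc n))" by (simp add: mi_u_def)
  ultimately show ?case using Suc by (simp add: Let_def)
qed

lemma mi_u_Suc: "mi_u S z p (Suc n) x = max (p * (1 + mi_s S z p n x / S) ^ (1 + z) * mi_u S z p n x) (- mi_s S z p n x - S)"
proof -
  have "mi_u S z p (Suc n) x = fst (mi_pair S z p x (Suc n))" by (simp add: mi_u_def)
  also have "\<dots> = max (p * (1 + mi_s S z p n x / S) ^ (1 + z) * mi_u S z p n x) (- mi_s S z p n x - S)"
    by (simp only: mi_pair.simps(2)) (simp add: mi_pair_eq Let_def del: power_Suc)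
  finally show ?thesis .
qed

lemma mi_s_Suc: "mi_s S z p (Suc n) x = mi_s S z p n x + mi_u S z p (Suc n) x"
  by (simp add: mi_s_def)

lemma mi_0: "mi_u S z p 0 x = max x (-S)" "mi_s S z p 0 x = max x (-S)"
  by (simp_all add: mi_u_def mi_s_def)

lemma seq_summable:
  fixes u s :: "nat \<Rightarrow> real"
  assumes S: "S > 0" and z: "z \<le> 1"
   and hu: "\<And>n. u (Suc n) = max (p * (1 + s n / S) ^ (1 + z) * u n) (- s n - S)"
   and hs: "\<And>n. s (Suc n) = s n + u (Suc n)"
   and h0: "s 0 = u 0" "u 0 \<ge> -S"
   and bd: "\<And>n. \<bar>s n\<bar> \<le> Bd"
  shows "summable (\<lambda>n. \<bar>u n\<bar>)"
proof -
  have sge: "s n \<ge> -S" for n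
  proof (induction n)
    case 0 then show ?case using h0 by simp
  next
    case (Suc n) then show ?case using hs[of n] hu[of n] by simp
  qed
  define t where "t n = 1 + s n / S" for n
  have t0: "t n \<ge> 0" for n using sge[of n] S by (simp add: t_def field_simps)
  have negS: "- s n - S = - S * t n" for n using S by (simp add: t_def field_simps)
  have hu': "u (Suc n) = max (p * t n ^ Suc z * u n) (- S * t n)" for n
    using hu[of n] negS[of n] by (simp add: t_def)
  have psum: "(\<Sum>i<Suc n. u i) = s n" for n
    by (induction n) (simp_all add: h0 hs)
  have Bd0: "Bd \<ge> 0" using bd[of 0] by linarith
  show ?thesis
  proof (cases "p \<ge> 0")
    case True
    show ?thesis
    proof (cases "u 0 \<ge> 0")
      case True
      have un: "u n \<ge> 0" for n
      proof (induction n)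
        case 0 then show ?case using True by simp
      next
        case (Suc n)
        have "p * t n ^ Suc z * u n \<ge> 0" using \<open>p \<ge> 0\<close> t0[of n] Suc by simp
        then show ?case using hu'[of n] by simp
      qed
      have "summable u"
      proof (rule summableI_nonneg_bounded[where x = Bd])
        show "0 \<le> u n" for n by (rule un)
        show "sum u {..<n} \<le> Bd" for n
        proof (cases n)
          case 0 then show ?thesis using Bd0 by simp
        next
          case (Suc m) then show ?thesis using psum[of m] bd[of m] by simp
        qed
      qed
      then show ?thesis using un by simp
    next
      case False
      have un: "u n \<le> 0" for n
      proof (induction n)
        case 0 then show ?case using False by simp
      next
        case (Suc n)
        have "p * t n ^ Suc z * u n \<le> 0" using \<open>p \<ge> 0\<close> t0[of n] Suc
          by (simp add: mult_nonneg_nonpos)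
        moreover have "- S * t n \<le> 0" using S t0[of n] by simp
        ultimately show ?case using hu'[of n] by simp
      qed
      have "summable (\<lambda>n. - u n)"
      proof (rule summableI_nonneg_bounded[where x = Bd])
        show "0 \<le> - u n" for n using un[of n] by simp
        show "(\<Sum>i<n. - u i) \<le> Bd" for n
        proof (cases n)
          case 0 then show ?thesis using Bd0 by simp
        next
          case (Suc m) then show ?thesis using psum[of m] bd[of m] by (simp add: sum_negf)
        qed
      qed
      moreover have "\<bar>u n\<bar> = - u n" for n using un[of n] by simp
      ultimately show ?thesis by simp
    qed
  next
    case False
    then have p: "p < 0" by simp
    have zero_prop: "u (Suc n) = 0" if "u n = 0 \<or> t n = 0" for n
    proof -
      have "- S * t n \<le> 0" using S t0[of n] by simp
      then show ?thesis using that hu'[of n] by auto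
    qed
    show ?thesis
    proof (cases "\<exists>n0. u n0 = 0 \<or> t n0 = 0")
      case True
      then obtain n0 where n0: "u n0 = 0 \<or> t n0 = 0" by blast
      have "u (Suc n0 + m) = 0" for m
      proof (induction m)
        case 0 then show ?case using zero_prop[OF n0] by simp
      next
        case (Suc m) then show ?case using zero_prop[of "Suc n0 + m"] by simp
      qed
      then have "summable (\<lambda>m. \<bar>u (m + Suc n0)\<bar>)" by (simp add: add.commute)
      then show ?thesis using summable_iff_shift[of "\<lambda>n. \<bar>u n\<bar>" "Suc n0"] by simp
    next
      case False
      then have nz: "u n \<noteq> 0" "t n > 0" for n using t0[of n] by (auto simp: less_le)
      have rec: "u (Suc n) = p * t n ^ Suc z * u n" for n
      proof (rule ccontr)
        assume a: "u (Suc n) \<noteq> p * t n ^ Suc z * u n"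
        then have "u (Suc n) = - S * t n" using hu'[of n] by (auto simp: max_def split: if_splits)
        then have "s (Suc n) = - S" using hs[of n] negS[of n] by simp
        then have "t (Suc n) = 0" using S by (simp add: t_def)
        then show False using nz(2)[of "Suc n"] by simp
      qed
      define w where "w n = u n / S" for n
      define q where "q = - p"
      have q: "q > 0" using p by (simp add: q_def)
      have rw: "w (Suc n) = - q * t n ^ Suc z * w n" for n using rec[of n] by (simp add: w_def q_def)
      have rt: "t (Suc n) = t n + w (Suc n)" for n using hs[of n] S by (simp add: t_def w_def field_simps)
      have tT: "t n \<le> 1 + Bd / S" for n using bd[of n] S by (simp add: t_def divide_right_mono abs_le_iff)
      have sw: "summable (\<lambda>n. \<bar>w n\<bar>)"
      proof (cases "w 0 > 0")
        case True
        show ?thesis by (rule core[OF q z nz(2) tT rw rt True])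
      next
        case False
        then have "w 0 < 0" using nz(1)[of 0] S by (simp add: w_def less_le)
        then have w1: "w (Suc 0) > 0" using rw[of 0] q nz(2)[of 0] by (simp add: mult_pos_neg mult_neg_neg)
        have "summable (\<lambda>n. \<bar>w (Suc n)\<bar>)"
          by (rule core[of q z "\<lambda>n. t (Suc n)" "1 + Bd / S" "\<lambda>n. w (Suc n)", OF q z nz(2) tT rw rt w1])
        then show ?thesis using summable_Suc_iff[of "\<lambda>n. \<bar>w n\<bar>"] by simp
      qed
      have "\<bar>u n\<bar> = S * \<bar>w n\<bar>" for n using S by (simp add: w_def abs_div)
      then show ?thesis using summable_mult[OF sw, of S] by simp
    qed
  qed
qed

lemma phi_lt_1:
  fixes u s :: "nat \<Rightarrow> real"
  assumes S: "S > 0"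
   and hu: "\<And>n. u (Suc n) = max (p * (1 + s n / S) ^ (1 + z) * u n) (- s n - S)"
   and hs: "\<And>n. s (Suc n) = s n + u (Suc n)"
   and h0: "s 0 = S" "u 0 = S"
   and bd: "\<And>n. \<bar>s n\<bar> \<le> Bd"
  shows "p < 1"
proof (rule ccontr)
  assume "\<not> p < 1" then have p: "p \<ge> 1" by simp
  have main: "u n \<ge> S \<and> s n \<ge> real (Suc n) * S" for n
  proof (induction n)
    case 0 then show ?case using h0 by simp
  next
    case (Suc n)
    have "real (Suc n) * S \<ge> 0" using S by simp
    then have "s n \<ge> 0" using Suc by linarith
    then have tn: "1 + s n / S \<ge> 1" using S by simp
    have "(1 + s n / S) ^ (1 + z) \<ge> 1" using tn by (intro one_le_power) auto
    then have "p * (1 + s n / S) ^ (1 + z) \<ge> 1 * 1" using p by (intro mult_mono) auto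
    then have "p * (1 + s n / S) ^ (1 + z) * u n \<ge> 1 * u n" using Suc S by (intro mult_right_mono) auto
    then have un: "u (Suc n) \<ge> u n" using hu[of n] by simp
    then have "u (Suc n) \<ge> S" using Suc by simp
    moreover have "s (Suc n) \<ge> real (Suc (Suc n)) * S" using hs[of n] Suc \<open>u (Suc n) \<ge> S\<close>
      by (simp add: algebra_simps)
    ultimately show ?case by simp
  qed
  obtain n where n: "Bd / S < real n" using reals_Archimedean2 by blast
  have "real (Suc n) * S > Bd" using n S by (simp add: field_simps)
  moreover have "s n \<le> Bd" using bd[of n] by simp
  moreover have "s n \<ge> real (Suc n) * S" using main by blast
  ultimately show False by simp
qed

theorem theorem4p2:
  fixes S \<phi> :: real and \<zeta> :: nat
  assumes "S > 0" and "\<zeta> \<in> {0, 1}"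
    and "\<forall>x::real. bounded (range (\<lambda>n. mi_s S \<zeta> \<phi> n x))"
  shows "(admissible_trading (mi_u S \<zeta> \<phi>) \<longleftrightarrow> \<phi> < 1)
       \<and> (\<phi> < 1 \<longleftrightarrow> (\<exists>R>0. \<forall>x\<in>{-R<..<R}. summable (\<lambda>n. mi_u S \<zeta> \<phi> n x)))
       \<and> ((\<exists>R>0. \<forall>x\<in>{-R<..<R}. summable (\<lambda>n. mi_u S \<zeta> \<phi> n x))
           \<longleftrightarrow> (\<exists>R>0. \<forall>x\<in>{-R<..<R}. summable (\<lambda>n. \<bar>mi_u S \<zeta> \<phi> n x\<bar>)))"
proof -
  have z: "\<zeta> \<le> 1" using assms(2) by auto
  have bdx: "\<exists>Bd. \<forall>n. \<bar>mi_s S \<zeta> \<phi> n x\<bar> \<le> Bd" for x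
    using assms(3) unfolding bounded_iff by auto
  have abs_sum: "summable (\<lambda>n. \<bar>mi_u S \<zeta> \<phi> n x\<bar>)" for x
  proof -
    obtain Bd where Bd: "\<And>n. \<bar>mi_s S \<zeta> \<phi> n x\<bar> \<le> Bd" using bdx by blast
    show ?thesis
      by (rule seq_summable[where u="\<lambda>n. mi_u S \<zeta> \<phi> n x" and s="\<lambda>n. mi_s S \<zeta> \<phi> n x" and p=\<phi> and S=S and z=\<zeta> and Bd=Bd,
            OF assms(1) z mi_u_Suc mi_s_Suc _ _ Bd]) (auto simp: mi_0)
  qed
  have sum: "summable (\<lambda>n. mi_u S \<zeta> \<phi> n x)" for x by (rule summable_rabs_cancel[OF abs_sum])
  have p1: "\<phi> < 1"
  proof -
    obtain Bd where Bd: "\<And>n. \<bar>mi_s S \<zeta> \<phi> n S\<bar> \<le> Bd" using bdx by blast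
    show ?thesis
      by (rule phi_lt_1[where u="\<lambda>n. mi_u S \<zeta> \<phi> n S" and s="\<lambda>n. mi_s S \<zeta> \<phi> n S" and p=\<phi> and S=S and z=\<zeta> and Bd=Bd,
            OF assms(1) mi_u_Suc mi_s_Suc _ _ Bd]) (use assms(1) in \<open>auto simp: mi_0\<close>)
  qed
  have A: "admissible_trading (mi_u S \<zeta> \<phi>)" unfolding admissible_trading_def
    using sum by (intro exI[of _ 1]) auto
  have B: "\<exists>R>0. \<forall>x\<in>{-R<..<R}. summable (\<lambda>n. mi_u S \<zeta> \<phi> n x)" using sum by (intro exI[of _ 1]) auto
  have C: "\<exists>R>0. \<forall>x\<in>{-R<..<R}. summable (\<lambda>n. \<bar>mi_u S \<zeta> \<phi> n x\<bar>)" using abs_sum by (intro exI[of _ 1]) auto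
  show ?thesis using A B C p1 by blast
qed

end
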